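(* Let $d\ge 1$, $B>0$, $\alpha>0$, $D>0$, and let $\mathcal{X}\subseteq\mathbb{R}^d$ satisfy $\mathcal{X}\supseteq\{x\in\mathbb{R}^d:\|x\|_\infty\le D\}$. If there exists a pair $(f,O)\in\mathcal{O}_{\mathtt{sc}}$ on $\mathcal{X}$ (with parameters $B,\alpha$), then \[ \frac{B}{\alpha}\ \ge\ \frac{D\,d^{1/2}}{4}. \]
   Context: An oracle $O$ for a function $f:\mathcal{X}\to\mathbb{R}$ returns, on query $x\in\mathcal{X}$, a random vector $\hat g(x)\in\mathbb{R}^d$. The class $\mathcal{O}_{\mathtt{sc}}$ consists of all pairs $(f,O)$ such that: $f$ is convex on $\mathcal{X}$; $f$ is $\alpha$-strongly convex on $\mathcal{X}$, i.e. $x\mapsto f(x)-\frac{\alpha}{2}\|x\|_2^2$ is convex on $\mathcal{X}$; $\mathbb{E}[\hat g(x)\mid x]\in\partial f(x)$ for all $x\in\mathcal{X}$ (where $\partial f(x)$ is the subgradient set); and $\Pr(\|\hat g(x)\|_2^2\le B^2\mid x)=1$ for all $x\in\mathcal{X}$. *)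

theory Defs
  imports "HOL-Analysis.Analysis" "HOL-Probability.Probability"
begin

definition subdifferential :: "('a::real_inner) set \<Rightarrow> ('a \<Rightarrow> real) \<Rightarrow> 'a \<Rightarrow> 'a set" where
  "subdifferential X f x = {g. \<forall>y\<in>X. f y \<ge> f x + inner g (y - x)}"

text \<open>An oracle maps each query x to the distribution (a probability measure on
  the Borel sets of R^d) of the random vector g(x).  The class O_sc with
  parameters B and alpha on the domain X.\<close>
definition O_sc :: "real \<Rightarrow> real \<Rightarrow> ('a::euclidean_space) set \<Rightarrow> ('a \<Rightarrow> real) \<Rightarrow> ('a \<Rightarrow> 'a measure) \<Rightarrow> bool" where
  "O_sc B \<alpha> X f Orc \<longleftrightarrow>
     convex_on X f \<and>
     convex_on X (\<lambda>x. f x - \<alpha> / 2 * (norm x)\<^sup>2) \<and>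
     (\<forall>x\<in>X. prob_space (Orc x) \<and> sets (Orc x) = sets borel \<and>
        integrable (Orc x) (\<lambda>v. v) \<and>
        (\<integral>v. v \<partial>(Orc x)) \<in> subdifferential X f x \<and>
        (AE v in Orc x. (norm v)\<^sup>2 \<le> B\<^sup>2))"

end

theory Submission
  imports Defs
begin

lemma oracle_bound:
  fixes M :: "('a::euclidean_space) measure"
  assumes "prob_space M" "integrable M (\<lambda>v. v)" "AE v in M. (norm v)\<^sup>2 \<le> B\<^sup>2" "B > 0"
  shows "norm (\<integral>v. v \<partial>M) \<le> B"
proof -
  interpret prob_space M by fact
  have ae: "AE v in M. norm v \<le> B"
    using assms(3) by eventually_elim (use assms(4) in \<open>simp add: abs_le_square_iff[symmetric]\<close>)
  have "norm (\<integral>v. v \<partial>M) \<le> (\<integral>v. norm v \<partial>M)" by (rule integral_norm_bound)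
  also have "\<dots> \<le> (\<integral>v. B \<partial>M)"
    by (rule integral_mono_AE) (use assms(2) ae in auto)
  also have "\<dots> = B" by (simp add: prob_space)
  finally show ?thesis .
qed

theorem lemma1:
  fixes B \<alpha> D :: real and X :: "(real ^ 'n) set"
    and f :: "real ^ 'n \<Rightarrow> real" and Orc :: "real ^ 'n \<Rightarrow> (real ^ 'n) measure"
  assumes "B > 0" and "\<alpha> > 0" and "D > 0"
    and "{x. \<forall>i. \<bar>x $ i\<bar> \<le> D} \<subseteq> X"
    and "O_sc B \<alpha> X f Orc"
  shows "B / \<alpha> \<ge> D * sqrt (real CARD('n)) / 4"
proof -
  define x :: "real ^ 'n" where "x = (\<chi> i. D)"
  have xX: "x \<in> X" and mxX: "-x \<in> X" and zX: "0 \<in> X"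
    using assms(3,4) by (auto simp: x_def)
  have O: "convex_on X f" "convex_on X (\<lambda>x. f x - \<alpha> / 2 * (norm x)\<^sup>2)"
    "\<And>x. x \<in> X \<Longrightarrow> prob_space (Orc x) \<and> integrable (Orc x) (\<lambda>v. v) \<and>
        (\<integral>v. v \<partial>(Orc x)) \<in> subdifferential X f x \<and> (AE v in Orc x. (norm v)\<^sup>2 \<le> B\<^sup>2)"
    using assms(5) unfolding O_sc_def by auto
  obtain g where g: "g \<in> subdifferential X f x" "norm g \<le> B"
    using O(3)[OF xX] oracle_bound assms(1) by blast
  obtain h where h: "h \<in> subdifferential X f (-x)" "norm h \<le> B"
    using O(3)[OF mxX] oracle_bound assms(1) by blast
  have f1: "f 0 \<ge> f x + inner g (0 - x)" using g(1) zX unfolding subdifferential_def by blast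
  have f2: "f 0 \<ge> f (-x) + inner h (0 - -x)" using h(1) zX unfolding subdifferential_def by blast
  have i1: "inner g x \<le> B * norm x"
    by (meson Cauchy_Schwarz_ineq2 g(2) mult_right_mono norm_ge_zero order_trans abs_le_D1)
  have i2: "- inner h x \<le> B * norm x"
    by (metis Cauchy_Schwarz_ineq2 abs_le_D2 h(2) mult_right_mono norm_ge_zero order_trans)
  have "(\<lambda>x. f x - \<alpha> / 2 * (norm x)\<^sup>2) ((1 - 1/2) *\<^sub>R x + (1/2) *\<^sub>R (-x)) \<le>
      (1 - 1/2) * (\<lambda>x. f x - \<alpha> / 2 * (norm x)\<^sup>2) x + (1/2) * (\<lambda>x. f x - \<alpha> / 2 * (norm x)\<^sup>2) (-x)"
    by (rule convex_onD[OF O(2)]) (use xX mxX in auto)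
  then have c: "f 0 \<le> (f x + f (-x)) / 2 - \<alpha> / 2 * (norm x)\<^sup>2" by (simp add: field_simps)
  have "\<alpha> * (norm x)\<^sup>2 \<le> 2 * B * norm x" using c f1 f2 i1 i2 by (simp add: algebra_simps; linarith)
  then have "\<alpha> * norm x \<le> 2 * B"
    by (cases "norm x = 0") (use assms(1) in \<open>auto simp: power2_eq_square\<close>)
  moreover have "norm x = D * sqrt (real CARD('n))"
  proof -
    have "inner x x = real CARD('n) * D\<^sup>2" by (simp add: x_def inner_vec_def power2_eq_square)
    then show ?thesis using assms(3)
      by (simp add: norm_eq_sqrt_inner real_sqrt_mult)
  qed
  ultimately have "\<alpha> * (D * sqrt (real CARD('n))) \<le> 2 * B" by simp
  then have "D * sqrt (real CARD('n)) \<le> 2 * B / \<alpha>" using assms(2) by (simp add: field_simps)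
  moreover have "2 * B / \<alpha> \<le> 4 * (B / \<alpha>)" using assms(1,2) by (simp add: divide_right_mono)
  ultimately show ?thesis by simp
qed

end
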